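(* Let $N=\{1,\dots,n\}$, $\eta>0$, integers $B\ge1$, $Q\ge1$. Let $(A(k))_{k\ge0}$ be $n\times n$ matrices such that each $A(k)$ is doubly stochastic with positive diagonal entries and all positive entries at least $\eta$, and such that for every integer $k\ge0$ the directed graph $(N,\mathcal{E}(A(kB))\cup\cdots\cup\mathcal{E}(A((k+1)B-1)))$ is strongly connected. Let $x(0)\in\mathbb{R}^n$ have all components multiples of $1/Q$, and define componentwise $x_i(k+1)=\lfloor\sum_{j=1}^n a_{ij}(k)x_j(k)\rfloor$, where $\lfloor\cdot\rfloor$ is rounding down to the nearest multiple of $1/Q$. Let $U=\max_ix_i(0)$, $L=\min_ix_i(0)$ and $K=(U-L)Q$. If $k\ge nBK$, then all components of $x(k)$ are equal.
   Context: A matrix is doubly stochastic if it is nonnegative with all row and column sums equal to $1$. For a matrix $A=[a_{ij}]$, $\mathcal{E}(A)$ is the set of directed edges $(j,i)$ (including self-edges) with $a_{ij}>0$. *)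

theory Defs
  imports Complex_Main
begin

text \<open>Matrices are n x n with indices 0..n-1, represented as nat => nat => real
  (row i, column j).\<close>

definition doubly_stochastic :: "nat \<Rightarrow> (nat \<Rightarrow> nat \<Rightarrow> real) \<Rightarrow> bool" where
  "doubly_stochastic n M \<longleftrightarrow>
     (\<forall>i<n. \<forall>j<n. M i j \<ge> 0) \<and>
     (\<forall>i<n. (\<Sum>j<n. M i j) = 1) \<and>
     (\<forall>j<n. (\<Sum>i<n. M i j) = 1)"

definition edges :: "nat \<Rightarrow> (nat \<Rightarrow> nat \<Rightarrow> real) \<Rightarrow> (nat \<times> nat) set" where
  "edges n M = {(j, i). i < n \<and> j < n \<and> M i j > 0}"

definition strongly_connected_on :: "nat \<Rightarrow> (nat \<times> nat) set \<Rightarrow> bool" where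
  "strongly_connected_on n E \<longleftrightarrow> (\<forall>i<n. \<forall>j<n. (i, j) \<in> E\<^sup>*)"

definition round_down :: "nat \<Rightarrow> real \<Rightarrow> real" where
  "round_down Q y = real_of_int \<lfloor>real Q * y\<rfloor> / real Q"

end

theory Submission
  imports Defs
begin

lemma path_cross:
  assumes "(j,i) \<in> E\<^sup>*" "j \<notin> S" "i \<in> S"
  shows "\<exists>a b. (a,b) \<in> E \<and> a \<notin> S \<and> b \<in> S"
  using assms by (induction rule: rtrancl_induct) blast+

lemma int_lt_le:
  fixes y c :: real
  assumes "y \<in> \<int>" "c \<in> \<int>" "y \<le> c" "y \<noteq> c"
  shows "y \<le> c - 1"
proof -
  obtain a where a: "y = of_int a" using assms(1) Ints_cases by blast
  obtain b where b: "c = of_int b" using assms(2) Ints_cases by blast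
  have "a < b" using assms(3,4) a b by auto
  then have "a \<le> b - 1" by simp
  then show ?thesis using a b by (metis of_int_1 of_int_diff of_int_le_iff)
qed

locale qc =
  fixes n B :: nat and A :: "nat \<Rightarrow> nat \<Rightarrow> nat \<Rightarrow> real" and Y :: "nat \<Rightarrow> nat \<Rightarrow> real"
  assumes ds: "\<And>k. doubly_stochastic n (A k)"
    and diag: "\<And>k i. i < n \<Longrightarrow> A k i i > 0"
    and conn: "\<And>k. strongly_connected_on n (\<Union>t\<in>{k*B..<(k+1)*B}. edges n (A t))"
    and Ystep: "\<And>k i. i < n \<Longrightarrow> Y (Suc k) i = of_int \<lfloor>\<Sum>j<n. A k i j * Y k j\<rfloor>"
    and Yint: "\<And>k i. i < n \<Longrightarrow> Y k i \<in> \<int>"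
begin

lemma nonneg: "i < n \<Longrightarrow> j < n \<Longrightarrow> A k i j \<ge> 0"
  using ds[of k] unfolding doubly_stochastic_def by blast

lemma rowsum: "i < n \<Longrightarrow> (\<Sum>j<n. A k i j) = 1"
  using ds[of k] unfolding doubly_stochastic_def by blast

lemma sum_le:
  assumes "\<forall>j<n. Y t j \<le> c" "i < n"
  shows "(\<Sum>j<n. A t i j * Y t j) \<le> c"
proof -
  have "(\<Sum>j<n. A t i j * Y t j) \<le> (\<Sum>j<n. A t i j * c)"
    by (rule sum_mono) (use assms nonneg[OF assms(2)] in \<open>auto intro: mult_left_mono\<close>)
  also have "\<dots> = c" using rowsum[OF assms(2)] by (simp add: sum_distrib_right[symmetric])
  finally show ?thesis .
qed

lemma up_step:
  assumes "\<forall>j<n. Y t j \<le> c" "i < n"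
  shows "Y (Suc t) i \<le> c"
  using sum_le[OF assms] Ystep[OF assms(2), of t] by (metis of_int_floor_le order_trans)

lemma low_step:
  assumes "\<forall>j<n. of_int C \<le> Y t j" "i < n"
  shows "of_int C \<le> Y (Suc t) i"
proof -
  have "(\<Sum>j<n. A t i j * of_int C) \<le> (\<Sum>j<n. A t i j * Y t j)"
    by (rule sum_mono) (use assms nonneg[OF assms(2)] in \<open>auto intro: mult_left_mono\<close>)
  moreover have "(\<Sum>j<n. A t i j * of_int C) = of_int C" using rowsum[OF assms(2)]
    by (simp add: sum_distrib_right[symmetric])
  ultimately have "C \<le> \<lfloor>\<Sum>j<n. A t i j * Y t j\<rfloor>" by (simp add: le_floor_iff)
  then show ?thesis using Ystep[OF assms(2), of t] by simp
qed

lemma eq_step: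
  assumes "\<forall>j<n. Y t j \<le> c" "i < n" "Y (Suc t) i = c" "j < n" "A t i j > 0"
  shows "Y t j = c"
proof -
  let ?s = "\<Sum>j<n. A t i j * Y t j"
  have s1: "?s \<le> c" by (rule sum_le[OF assms(1,2)])
  have "c \<le> ?s" using assms(3) Ystep[OF assms(2), of t] by (metis of_int_floor_le)
  then have "?s = c" using s1 by simp
  have "(\<Sum>j<n. A t i j * (c - Y t j)) = (\<Sum>j<n. A t i j * c) - ?s"
    by (simp add: right_diff_distrib sum_subtractf)
  also have "(\<Sum>j<n. A t i j * c) = c" using rowsum[OF assms(2)] by (simp add: sum_distrib_right[symmetric])
  finally have z: "(\<Sum>j<n. A t i j * (c - Y t j)) = 0" using \<open>?s = c\<close> by simp
  have nn: "\<forall>j\<in>{..<n}. 0 \<le> A t i j * (c - Y t j)"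
    using assms(1) nonneg[OF assms(2)] by auto
  have "A t i j * (c - Y t j) = 0" using sum_nonneg_eq_0_iff[of "{..<n}" "\<lambda>j. A t i j * (c - Y t j)"] nn z assms(4) by auto
  then show ?thesis using assms(5) by simp
qed

lemma up_mono:
  assumes "\<forall>j<n. Y t j \<le> c"
  shows "\<forall>j<n. Y (t+s) j \<le> c"
proof (induction s)
  case 0 then show ?case using assms by simp
next
  case (Suc s) then show ?case using up_step[of "t+s" c] by simp
qed

lemma low_mono:
  assumes "\<forall>j<n. of_int C \<le> Y t j"
  shows "\<forall>j<n. of_int C \<le> Y (t+s) j"
proof (induction s)
  case 0 then show ?case using assms by simp
next
  case (Suc s) then show ?case using low_step[of C "t+s"] by simp
qed

definition S :: "nat \<Rightarrow> real \<Rightarrow> nat set" where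
  "S t c = {i. i < n \<and> Y t i = c}"

lemma S_step:
  assumes "\<forall>j<n. Y t j \<le> c"
  shows "S (Suc t) c \<subseteq> S t c"
  using eq_step[OF assms] diag unfolding S_def by blast

lemma S_mono:
  assumes "\<forall>j<n. Y t j \<le> c"
  shows "S (t+s) c \<subseteq> S t c"
proof (induction s)
  case 0 then show ?case by simp
next
  case (Suc s)
  have "S (Suc (t+s)) c \<subseteq> S (t+s) c" by (rule S_step[OF up_mono[OF assms]])
  then show ?case using Suc by simp
qed

lemma window:
  assumes bd: "\<forall>j<n. Y t j \<le> c" and t: "t = r*B"
    and eq: "S (t+B) c = S t c" and ne: "i \<in> S t c" and out: "j < n" "j \<notin> S t c"
  shows False
proof -
  have const: "S (t+s) c = S t c" if "s \<le> B" for s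
  proof -
    have "S (t+s+(B-s)) c \<subseteq> S (t+s) c" by (rule S_mono[OF up_mono[OF bd]])
    moreover have "t+s+(B-s) = t+B" using that by simp
    ultimately show ?thesis using S_mono[OF bd, of s] eq by auto
  qed
  let ?E = "\<Union>t\<in>{r*B..<(r+1)*B}. edges n (A t)"
  have "i < n" using ne unfolding S_def by simp
  then have "(j,i) \<in> ?E\<^sup>*" using conn[of r] out unfolding strongly_connected_on_def by blast
  then obtain a b where ab: "(a,b) \<in> ?E" "a \<notin> S t c" "b \<in> S t c"
    using path_cross[of j i ?E "S t c"] out ne by blast
  then obtain \<tau> where tau: "\<tau> \<in> {r*B..<(r+1)*B}" "(a,b) \<in> edges n (A \<tau>)" by blast
  then have abn: "a < n" "b < n" "A \<tau> b a > 0" unfolding edges_def by auto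
  obtain s where s: "\<tau> = t + s" "s < B" using tau(1) t
    by (metis add.commute add_diff_inverse_nat atLeastLessThan_iff
        less_diff_conv2 mult_Suc not_less add_less_cancel_left plus_1_eq_Suc)
  have "b \<in> S (t + Suc s) c" using const[of "Suc s"] s ab by simp
  then have "Y (Suc \<tau>) b = c" using s unfolding S_def by simp
  have bdt: "\<forall>j<n. Y \<tau> j \<le> c" using up_mono[OF bd, of s] s(1) by simp
  have "Y \<tau> a = c" by (rule eq_step[OF bdt abn(2) \<open>Y (Suc \<tau>) b = c\<close> abn(1) abn(3)])
  then have "a \<in> S t c" using const[of s] s abn unfolding S_def by auto
  then show False using ab(2) by blast
qed

lemma shrink:
  assumes bd: "\<forall>j<n. Y t0 j \<le> c" and t: "t0 = r0*B" and out: "j0 < n" "Y t0 j0 \<noteq> c"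
    and cint: "c \<in> \<int>"
  shows "\<forall>i<n. Y (t0 + n*B) i \<le> c - 1"
proof -
  have out': "j0 \<notin> S t0 c" using out unfolding S_def by simp
  have fin: "finite (S t c)" for t unfolding S_def by (rule finite_subset[of _ "{..<n}"]) auto
  have P: "S (t0+m*B) c = {} \<or> card (S (t0+m*B) c) + m \<le> card (S t0 c)" for m
  proof (induction m)
    case 0 then show ?case by simp
  next
    case (Suc m)
    let ?T = "S (t0+m*B) c" and ?T' = "S (t0+m*B+B) c"
    have bdm: "\<forall>j<n. Y (t0+m*B) j \<le> c" by (rule up_mono[OF bd])
    have sub: "?T' \<subseteq> ?T" by (rule S_mono[OF bdm])
    have sub0: "?T \<subseteq> S t0 c" by (rule S_mono[OF bd])
    have e: "t0 + Suc m * B = t0+m*B+B" by simp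
    show ?case
    proof (cases "?T = {} \<or> ?T' = {}")
      case True then show ?thesis unfolding e using sub by auto
    next
      case False
      then obtain i where i: "i \<in> ?T" by blast
      have "?T' \<noteq> ?T"
      proof
        assume "?T' = ?T"
        have tt: "t0 + m*B = (r0+m)*B" using t by (simp add: algebra_simps)
        have "j0 \<notin> ?T" using out' sub0 by blast
        then show False using window[OF bdm tt \<open>?T' = ?T\<close> i out(1)] by blast
      qed
      then have "?T' \<subset> ?T" using sub by blast
      then have "card ?T' < card ?T" by (rule psubset_card_mono[OF fin])
      moreover have "card ?T + m \<le> card (S t0 c)" using Suc False by blast
      ultimately have "card ?T' + Suc m \<le> card (S t0 c)" by linarith
      then show ?thesis unfolding e by blast
    qed
  qed
  have sub: "S t0 c \<subseteq> {..<n}" unfolding S_def by blast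
  have "S t0 c \<noteq> {..<n}" using out' out(1) by blast
  then have "S t0 c \<subset> {..<n}" using sub by blast
  then have "card (S t0 c) < card {..<n::nat}" by (rule psubset_card_mono[rotated]) simp
  then have "card (S t0 c) < n" by simp
  then have emp: "S (t0+n*B) c = {}" using P[of n] by linarith
  show ?thesis
  proof (intro allI impI)
    fix i assume "i < n"
    have "Y (t0+n*B) i \<noteq> c" using emp \<open>i < n\<close> unfolding S_def by blast
    moreover have "Y (t0+n*B) i \<le> c" using up_mono[OF bd, of "n*B"] \<open>i < n\<close> by blast
    ultimately show "Y (t0+n*B) i \<le> c - 1"
      using int_lt_le[OF Yint[OF \<open>i < n\<close>] cint] by blast
  qed
qed

definition cons :: "nat \<Rightarrow> bool" where
  "cons t \<longleftrightarrow> (\<exists>C::int. \<forall>i<n. Y t i = of_int C)"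

lemma cons_mono:
  assumes "cons t" shows "cons (t+s)"
proof -
  obtain C where C: "\<forall>i<n. Y t i = of_int C" using assms unfolding cons_def by blast
  have "\<forall>i<n. Y (t+s) i \<le> of_int C" using up_mono[of t "of_int C"] C by simp
  moreover have "\<forall>i<n. of_int C \<le> Y (t+s) i" using low_mono[of C t] C by simp
  ultimately show ?thesis unfolding cons_def by (metis order_antisym)
qed

lemma main:
  assumes lo: "\<forall>i<n. of_int L \<le> Y 0 i" and hi: "\<forall>i<n. Y 0 i \<le> of_int H"
    and d: "H - L = int d" and k: "d*(n*B) \<le> k"
  shows "cons k"
proof -
  have Q: "(\<forall>i<n. Y (j*(n*B)) i \<le> of_int (H - int j)) \<or> cons (j*(n*B))" for j
  proof (induction j)
    case 0 then show ?case using hi by simp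
  next
    case (Suc j)
    have e: "Suc j * (n*B) = j*(n*B) + n*B" by simp
    show ?case
    proof (cases "cons (j*(n*B))")
      case True then show ?thesis unfolding e using cons_mono by blast
    next
      case False
      then have bd: "\<forall>i<n. Y (j*(n*B)) i \<le> of_int (H - int j)" using Suc by blast
      show ?thesis
      proof (cases "\<exists>j0<n. Y (j*(n*B)) j0 \<noteq> of_int (H - int j)")
        case True
        then obtain j0 where "j0 < n" "Y (j*(n*B)) j0 \<noteq> of_int (H - int j)" by blast
        from shrink[OF bd _ this, of "j*n"]
        have "\<forall>i<n. Y (j*(n*B) + n*B) i \<le> of_int (H - int j) - 1" by (simp add: mult.assoc)
        moreover have "of_int (H - int j) - 1 = (of_int (H - int (Suc j))::real)" by simp
        ultimately have "\<forall>i<n. Y (Suc j*(n*B)) i \<le> of_int (H - int (Suc j))" unfolding e by (simp only:)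
        then show ?thesis by blast
      next
        case False
        then have "cons (j*(n*B))" unfolding cons_def by blast
        then show ?thesis unfolding e using cons_mono by blast
      qed
    qed
  qed
  have "cons (d*(n*B))"
  proof -
    have low: "\<forall>i<n. of_int L \<le> Y (0 + d*(n*B)) i" by (rule low_mono[OF lo])
    from Q[of d] show ?thesis
    proof
      assume "\<forall>i<n. Y (d*(n*B)) i \<le> of_int (H - int d)"
      moreover have hL: "of_int (H - int d) = (of_int L::real)" using d by simp
      ultimately have "\<forall>i<n. Y (d*(n*B)) i \<le> of_int L" by simp
      then have "\<forall>i<n. Y (d*(n*B)) i = of_int L" using low by (auto intro: order_antisym)
      then show ?thesis unfolding cons_def by blast
    next
      assume "cons (d*(n*B))" then show ?thesis .
    qed
  qed
  then show ?thesis using cons_mono[of "d*(n*B)" "k - d*(n*B)"] k by simp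
qed

end

theorem proposition3:
  fixes n B Q :: nat and \<eta> :: real
    and A :: "nat \<Rightarrow> nat \<Rightarrow> nat \<Rightarrow> real"
    and x :: "nat \<Rightarrow> nat \<Rightarrow> real"
  assumes eta_pos: "\<eta> > 0"
    and B_pos: "B \<ge> 1" and Q_pos: "Q \<ge> 1"
    and ds: "\<And>k. doubly_stochastic n (A k)"
    and diag: "\<And>k i. i < n \<Longrightarrow> A k i i > 0"
    and lower: "\<And>k i j. i < n \<Longrightarrow> j < n \<Longrightarrow> A k i j > 0 \<Longrightarrow> A k i j \<ge> \<eta>"
    and conn: "\<And>k. strongly_connected_on n (\<Union>t\<in>{k*B..<(k+1)*B}. edges n (A t))"
    and init: "\<And>i. i < n \<Longrightarrow> \<exists>m::int. x 0 i = real_of_int m / real Q"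
    and step: "\<And>k i. i < n \<Longrightarrow> x (Suc k) i = round_down Q (\<Sum>j<n. A k i j * x k j)"
    and k_ge: "real k \<ge> real n * real B *
                 ((Max (x 0 ` {..<n}) - Min (x 0 ` {..<n})) * real Q)"
  shows "\<forall>i<n. \<forall>j<n. x k i = x k j"
proof (cases "n = 0")
  case True then show ?thesis by simp
next
  case False
  define Y where "Y = (\<lambda>t i. real Q * x t i)"
  have Qp: "real Q > 0" using Q_pos by simp
  have Ystep: "Y (Suc t) i = of_int \<lfloor>\<Sum>j<n. A t i j * Y t j\<rfloor>" if ii: "i < n" for t i
  proof -
    have e1: "(\<Sum>j<n. A t i j * Y t j) = real Q * (\<Sum>j<n. A t i j * x t j)"
      unfolding Y_def by (simp add: sum_distrib_left mult.left_commute)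
    have "Y (Suc t) i = real Q * (of_int \<lfloor>real Q * (\<Sum>j<n. A t i j * x t j)\<rfloor> / real Q)"
      unfolding Y_def step[OF ii] round_down_def by (rule refl)
    also have "\<dots> = of_int \<lfloor>real Q * (\<Sum>j<n. A t i j * x t j)\<rfloor>" using Qp by simp
    also have "\<dots> = of_int \<lfloor>\<Sum>j<n. A t i j * Y t j\<rfloor>" unfolding e1 by (rule refl)
    finally show ?thesis .
  qed
  have Yint: "Y t i \<in> \<int>" if ii: "i < n" for t i
  proof (cases t)
    case 0
    obtain m where "x 0 i = real_of_int m / real Q" using init[OF ii] by blast
    then show ?thesis using 0 Qp unfolding Y_def by simp
  next
    case (Suc s) then show ?thesis using Ystep[OF ii, of s] by simp
  qed
  interpret qc n B A Y
    using ds diag conn Ystep Yint by (intro qc.intro) blast+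
  have fin: "finite (x 0 ` {..<n})" and ne: "x 0 ` {..<n} \<noteq> {}" using False by auto
  obtain i1 where i1: "i1 < n" "Max (x 0 ` {..<n}) = x 0 i1" using Max_in[OF fin ne] by auto
  obtain i2 where i2: "i2 < n" "Min (x 0 ` {..<n}) = x 0 i2" using Min_in[OF fin ne] by auto
  obtain H where H: "Y 0 i1 = of_int H" using Yint[OF i1(1)] Ints_cases by blast
  obtain L where L: "Y 0 i2 = of_int L" using Yint[OF i2(1)] Ints_cases by blast
  have hi: "\<forall>i<n. Y 0 i \<le> of_int H"
  proof (intro allI impI)
    fix i assume "i < n"
    then have "x 0 i \<le> x 0 i1" using Max_ge[OF fin] i1 by auto
    then have "real Q * x 0 i \<le> real Q * x 0 i1" by (rule mult_left_mono) simp
    then show "Y 0 i \<le> of_int H" using H unfolding Y_def by simp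
  qed
  have lo: "\<forall>i<n. of_int L \<le> Y 0 i"
  proof (intro allI impI)
    fix i assume "i < n"
    then have "x 0 i2 \<le> x 0 i" using Min_le[OF fin] i2 by auto
    then have "real Q * x 0 i2 \<le> real Q * x 0 i" by (rule mult_left_mono) simp
    then show "of_int L \<le> Y 0 i" using L unfolding Y_def by simp
  qed
  have "(of_int L::real) \<le> of_int H" using hi lo i1(1) by (meson order_trans)
  then have "L \<le> H" by simp
  define d where "d = nat (H - L)"
  have d: "H - L = int d" using \<open>L \<le> H\<close> d_def by simp
  have "(Max (x 0 ` {..<n}) - Min (x 0 ` {..<n})) * real Q = of_int H - of_int L"
    using i1 i2 H L unfolding Y_def by (simp add: algebra_simps)
  also have "\<dots> = real_of_int (H - L)" by simp
  also have "\<dots> = real d" unfolding d by simp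
  finally have "real (d*(n*B)) \<le> real k" using k_ge by (simp add: algebra_simps)
  then have "d*(n*B) \<le> k" by linarith
  then have "cons k" using main[OF lo hi d] by blast
  then obtain C where C: "\<forall>i<n. Y k i = of_int C" unfolding cons_def by blast
  show ?thesis
  proof (intro allI impI)
    fix i j assume "i < n" "j < n"
    then have "real Q * x k i = real Q * x k j" using C unfolding Y_def by simp
    then show "x k i = x k j" using Qp by simp
  qed
qed

end
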